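(* Let $1\le p<\infty$, let $a>1/p$ and let $(\beta_k)_{k\in\mathbb{N}}$ be real numbers in $[a,\infty)$. Let $(\boldsymbol{w(k)})_{k\in\mathbb{N}}$ be weight sequences for which there exists $C\ge1$ such that for every $k\ge1$ and every $n\ge1$, $C^{-1}n^{\beta_k}\le|w_1(k)\cdots w_n(k)|\le Cn^{\beta_k}$. Then there exists a random vector with values in $\ell_p$ that is almost surely a common frequently hypercyclic vector for the family $(B_{\boldsymbol{w(k)}})_{k\in\mathbb{N}}$ on $\ell_p$.
   Context: $\ell_p$ is the space of complex sequences $(x_n)_{n\ge0}$ with finite $\|x\|_p$, unit vectors $(e_n)_{n\ge0}$. A weight is a bounded sequence of nonzero complex numbers; the weighted backward shift is $B_{\boldsymbol w}e_0=0$, $B_{\boldsymbol w}e_n=w_ne_{n-1}$. A vector is frequently hypercyclic for $T$ if for every nonempty open $U$ the set $\{n:T^nx\in U\}$ has positive lower density; common means for every member of the family. *)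

theory Defs
  imports "HOL-Probability.Probability"
begin

definition lp :: "real \<Rightarrow> (nat \<Rightarrow> complex) set" where
  "lp p = {x. summable (\<lambda>n. norm (x n) powr p)}"

definition lp_norm :: "real \<Rightarrow> (nat \<Rightarrow> complex) \<Rightarrow> real" where
  "lp_norm p x = (\<Sum>n. norm (x n) powr p) powr (1 / p)"

definition lp_open :: "real \<Rightarrow> (nat \<Rightarrow> complex) set \<Rightarrow> bool" where
  "lp_open p U \<longleftrightarrow> U \<subseteq> lp p \<and>
     (\<forall>u\<in>U. \<exists>e>0. \<forall>v\<in>lp p. lp_norm p (\<lambda>n. v n - u n) < e \<longrightarrow> v \<in> U)"

definition lp_borel :: "real \<Rightarrow> (nat \<Rightarrow> complex) measure" where
  "lp_borel p = sigma (lp p) {U. lp_open p U}"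

definition weight :: "(nat \<Rightarrow> complex) \<Rightarrow> bool" where
  "weight w \<longleftrightarrow> (\<forall>n. w n \<noteq> 0) \<and> (\<exists>M. \<forall>n. norm (w n) \<le> M)"

text \<open>Weighted backward shift: B e_0 = 0, B e_n = w_n e_(n-1).\<close>
definition bshift :: "(nat \<Rightarrow> complex) \<Rightarrow> (nat \<Rightarrow> complex) \<Rightarrow> (nat \<Rightarrow> complex)" where
  "bshift w x = (\<lambda>n. w (Suc n) * x (Suc n))"

definition lower_density :: "nat set \<Rightarrow> ereal" where
  "lower_density A = liminf (\<lambda>N. ereal (real (card (A \<inter> {..<N})) / real N))"

definition freq_hypercyclic ::
  "real \<Rightarrow> ((nat \<Rightarrow> complex) \<Rightarrow> (nat \<Rightarrow> complex)) \<Rightarrow> (nat \<Rightarrow> complex) \<Rightarrow> bool" where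
  "freq_hypercyclic p T x \<longleftrightarrow> x \<in> lp p \<and>
     (\<forall>U. lp_open p U \<and> U \<noteq> {} \<longrightarrow> lower_density {n. (T ^^ n) x \<in> U} > 0)"

end

theory Submission
  imports Defs "HOL-Library.Discrete_Functions" "HOL-Library.Countable"
begin


lemma tail_lim:
  fixes f :: "nat \<Rightarrow> real"
  assumes sf: "summable f"
  shows "(\<lambda>M. \<Sum>i. if M \<le> i then f i else 0) \<longlonglongrightarrow> 0"
proof -
  have eq: "(\<Sum>i. if M \<le> i then f i else 0) = suminf f - (\<Sum>i<M. f i)" for M
  proof -
    have fin: "summable (\<lambda>i. if i < M then f i else 0)"
      by (rule summable_finite[of "{..<M}"]) auto
    have "(\<lambda>i. if M \<le> i then f i else 0) = (\<lambda>i. f i - (if i < M then f i else 0))"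
      by auto
    hence "(\<Sum>i. if M \<le> i then f i else 0) = suminf f - (\<Sum>i. if i < M then f i else 0)"
      using suminf_diff[OF sf fin] by simp
    also have "(\<Sum>i. if i < M then f i else 0) = (\<Sum>i<M. f i)"
      by (subst suminf_finite[of "{..<M}"]) auto
    finally show ?thesis .
  qed
  have "(\<lambda>M. suminf f - (\<Sum>i<M. f i)) \<longlonglongrightarrow> suminf f - suminf f"
    by (intro tendsto_intros summable_LIMSEQ sf)
  thus ?thesis unfolding eq by simp
qed

lemma tail_summable:
  fixes f :: "nat \<Rightarrow> real"
  assumes "summable f"
  shows "summable (\<lambda>i. if M \<le> i then f i else 0)"
proof -
  have "summable (\<lambda>i. f i - (if i < M then f i else 0))"
    by (intro summable_diff assms summable_finite[of "{..<M}"]) auto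
  moreover have "(\<lambda>i. f i - (if i < M then f i else 0)) = (\<lambda>i. if M \<le> i then f i else 0)"
    by auto
  ultimately show ?thesis by simp
qed

lemma quasi_tri:
  fixes a b :: complex and p :: real
  assumes "p > 0"
  shows "norm (a + b) powr p \<le> 2 powr p * (norm a powr p + norm b powr p)"
proof -
  let ?m = "max (norm a) (norm b)"
  have "norm (a + b) \<le> 2 * ?m" using norm_triangle_ineq[of a b] by linarith
  hence "norm (a + b) powr p \<le> (2 * ?m) powr p" by (intro powr_mono2) (use assms in auto)
  also have "\<dots> = 2 powr p * ?m powr p" by (simp add: powr_mult)
  also have "?m powr p \<le> norm a powr p + norm b powr p"
    by (cases "norm a \<le> norm b") (auto simp: max_def)
  hence "2 powr p * ?m powr p \<le> 2 powr p * (norm a powr p + norm b powr p)"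
    by (intro mult_left_mono) auto
  finally show ?thesis .
qed

definition Yl :: "(rat \<times> rat) list \<Rightarrow> nat \<Rightarrow> complex" where
  "Yl ys i = (if i < length ys then Complex (of_rat (fst (ys ! i))) (of_rat (snd (ys ! i))) else 0)"

lemma rat_approx_complex:
  fixes z :: complex and \<rho> :: real
  assumes "\<rho> > 0"
  shows "\<exists>q :: rat \<times> rat. norm (z - Complex (of_rat (fst q)) (of_rat (snd q))) < \<rho>"
proof -
  obtain r1 where r1: "r1 \<in> \<rat>" "Re z - \<rho>/2 < r1" "r1 < Re z + \<rho>/2"
    using Rats_dense_in_real[of "Re z - \<rho>/2" "Re z + \<rho>/2"] assms by auto
  obtain r2 where r2: "r2 \<in> \<rat>" "Im z - \<rho>/2 < r2" "r2 < Im z + \<rho>/2"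
    using Rats_dense_in_real[of "Im z - \<rho>/2" "Im z + \<rho>/2"] assms by auto
  obtain q1 where q1: "r1 = of_rat q1" using r1(1) Rats_cases by blast
  obtain q2 where q2: "r2 = of_rat q2" using r2(1) Rats_cases by blast
  have "norm (z - Complex r1 r2) \<le> \<bar>Re z - r1\<bar> + \<bar>Im z - r2\<bar>"
    using cmod_le[of "z - Complex r1 r2"] by simp
  also have "\<dots> < \<rho>" using r1 r2 by linarith
  finally show ?thesis using q1 q2 by (intro exI[of _ "(q1, q2)"]) simp
qed

lemma approx_lp:
  fixes u :: "nat \<Rightarrow> complex" and p \<eta> :: real
  assumes p: "p > 0" and u: "u \<in> lp p" and eta: "\<eta> > 0"
  shows "\<exists>ys. summable (\<lambda>i. norm (u i - Yl ys i) powr p) \<and> (\<Sum>i. norm (u i - Yl ys i) powr p) < \<eta>"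
proof -
  let ?f = "\<lambda>i. norm (u i) powr p"
  have sf: "summable ?f" using u by (simp add: lp_def)
  from tail_lim[OF sf] have "eventually (\<lambda>M. (\<Sum>i. if M \<le> i then ?f i else 0) < \<eta>/2) sequentially"
    using eta by (intro order_tendstoD) auto
  then obtain N where N: "(\<Sum>i. if N \<le> i then ?f i else 0) < \<eta>/2"
    by (auto simp: eventually_sequentially)
  define \<rho> where "\<rho> = (\<eta> / (2 * (N + 1))) powr (1/p)"
  have rho: "\<rho> > 0" using eta by (simp add: \<rho>_def)
  have rhop: "\<rho> powr p = \<eta> / (2 * (N + 1))"
    unfolding \<rho>_def using p eta by (simp add: powr_powr)
  have "\<forall>i. \<exists>q :: rat \<times> rat. norm (u i - Complex (of_rat (fst q)) (of_rat (snd q))) < \<rho>"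
    using rat_approx_complex[OF rho] by blast
  then obtain f where f: "\<And>i. norm (u i - Complex (of_rat (fst (f i))) (of_rat (snd (f i)))) < \<rho>"
    by metis
  define ys where "ys = map f [0..<N]"
  define h where "h i = (if i < N then \<eta> / (2 * (N + 1)) else 0) + (if N \<le> i then ?f i else 0)" for i
  have le: "norm (u i - Yl ys i) powr p \<le> h i" for i
  proof (cases "i < N")
    case True
    hence "Yl ys i = Complex (of_rat (fst (f i))) (of_rat (snd (f i)))"
      by (simp add: Yl_def ys_def)
    hence "norm (u i - Yl ys i) powr p \<le> \<rho> powr p"
      using f[of i] p by (intro powr_mono2) auto
    thus ?thesis using True rhop by (simp add: h_def)
  next
    case False
    thus ?thesis by (simp add: Yl_def ys_def h_def)
  qed
  have s1: "summable (\<lambda>i. if i < N then \<eta> / (2 * (N + 1)) else 0)"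
    by (rule summable_finite[of "{..<N}"]) auto
  have s2: "summable (\<lambda>i. if N \<le> i then ?f i else 0)" by (rule tail_summable[OF sf])
  have sh: "summable h" unfolding h_def by (intro summable_add s1 s2)
  have sm: "summable (\<lambda>i. norm (u i - Yl ys i) powr p)"
    by (rule summable_comparison_test'[OF sh]) (use le in auto)
  have "(\<Sum>i. norm (u i - Yl ys i) powr p) \<le> suminf h"
    by (rule suminf_le[OF le sm sh])
  also have "suminf h = (\<Sum>i. if i < N then \<eta> / (2 * (N + 1)) else 0) + (\<Sum>i. if N \<le> i then ?f i else 0)"
    unfolding h_def by (rule suminf_add[OF s1 s2, symmetric])
  also have "(\<Sum>i. if i < N then \<eta> / (2 * (N + 1)) else 0) = N * (\<eta> / (2 * (N + 1)))"
    by (subst suminf_finite[of "{..<N}"]) auto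
  also have "N * (\<eta> / (2 * (N + 1))) \<le> \<eta>/2"
    using eta by (simp add: field_simps)
  finally show ?thesis using sm N by (intro exI[of _ ys]) auto
qed

definition tau :: "nat \<Rightarrow> nat" where
  "tau j = (LEAST s. j mod 2^(s+1) = (2::nat)^s)"

lemma tau_eq:
  assumes "j mod 2^(t+1) = (2::nat)^t"
  shows "tau j = t"
  unfolding tau_def
proof (rule Least_equality)
  show "j mod 2^(t+1) = (2::nat)^t" by fact
next
  fix s assume s: "j mod 2^(s+1) = (2::nat)^s"
  show "t \<le> s"
  proof (rule ccontr)
    assume "\<not> t \<le> s"
    hence st: "s + 1 \<le> t" by simp
    have d1: "(2::nat)^(s+1) dvd 2^(t+1)" by (rule le_imp_power_dvd) (use st in simp)
    have d2: "(2::nat)^(s+1) dvd 2^t" by (rule le_imp_power_dvd) (use st in simp)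
    have "j mod 2^(s+1) = j mod 2^(t+1) mod 2^(s+1)" by (metis mod_mod_cancel d1)
    also have "\<dots> = 0" using assms d2 by simp
    finally show False using s by simp
  qed
qed

lemma tau_window: "\<exists>j. a \<le> j \<and> j < a + 2^(t+1) \<and> tau j = t"
proof -
  define W :: nat where "W = 2^(t+1)"
  have W: "W = 2 * 2^t" by (simp add: W_def)
  define q where "q = a div W"
  have Wp: "W > 0" by (simp add: W_def)
  have ae: "a = q * W + a mod W" using div_mult_mod_eq[of a W] by (simp add: q_def)
  have "a mod W < W" using Wp by simp
  hence qa: "q * W \<le> a" "a < q * W + W" using ae by linarith+
  have m: "(c * W + 2^t) mod W = 2^t" for c using W by simp
  show ?thesis
  proof (cases "a \<le> q * W + 2^t")
    case True
    thus ?thesis using qa m[of q] W by (intro exI[of _ "q * W + 2^t"]) (auto intro!: tau_eq simp: W_def)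
  next
    case False
    thus ?thesis using qa m[of "Suc q"] W by (intro exI[of _ "Suc q * W + 2^t"]) (auto intro!: tau_eq simp: W_def)
  qed
qed

lemma bshift_iter:
  assumes "\<And>j. w j \<noteq> 0"
  shows "((bshift w)^^m) x i = (\<Prod>j\<in>{1..i+m}. w j) / (\<Prod>j\<in>{1..i}. w j) * x (i+m)"
proof (induction m arbitrary: i)
  case 0
  have "(\<Prod>j\<in>{1..i}. w j) \<noteq> 0" using assms by (simp add: prod_zero_iff)
  thus ?case by simp
next
  case (Suc m)
  have nz: "(\<Prod>j\<in>{1..i}. w j) \<noteq> 0" using assms by (simp add: prod_zero_iff)
  have P: "(\<Prod>j\<in>{1..Suc i}. w j) = w (Suc i) * (\<Prod>j\<in>{1..i}. w j)"
    by (rule prod.nat_ivl_Suc') simp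
  have "((bshift w)^^Suc m) x i = w (Suc i) * ((bshift w)^^m) x (Suc i)"
    by (simp add: bshift_def)
  also have "\<dots> = w (Suc i) * ((\<Prod>j\<in>{1..Suc i+m}. w j) / (\<Prod>j\<in>{1..Suc i}. w j) * x (Suc i+m))"
    using Suc by simp
  also have "\<dots> = (\<Prod>j\<in>{1..i+Suc m}. w j) / (\<Prod>j\<in>{1..i}. w j) * x (i+Suc m)"
    using nz assms[of "Suc i"] unfolding P by (simp add: field_simps)
  finally show ?case .
qed




context
  fixes p a C :: real and \<beta> :: "nat \<Rightarrow> real" and w :: "nat \<Rightarrow> nat \<Rightarrow> complex"
  assumes p1: "1 \<le> p" and ap: "a > 1 / p"
    and \<beta>a: "\<And>k. k \<ge> 1 \<Longrightarrow> \<beta> k \<ge> a"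
    and wt: "\<And>k. k \<ge> 1 \<Longrightarrow> weight (w k)"
    and C1: "C \<ge> 1"
    and Pb: "\<And>k n. k \<ge> 1 \<Longrightarrow> n \<ge> 1 \<Longrightarrow>
           real n powr \<beta> k / C \<le> norm (\<Prod>j\<in>{1..n}. w k j)
         \<and> norm (\<Prod>j\<in>{1..n}. w k j) \<le> C * real n powr \<beta> k"
begin

definition P where "P k n = (\<Prod>j\<in>{1..n}. w k j)"
definition gam where "gam = (a + 1/p)/2"
definition g where "g i = real i powr (-(gam * p))"
definition T where "T M = (\<Sum>i. if M \<le> i then g i else 0)"
definition tgt :: "nat \<Rightarrow> nat \<times> (rat \<times> rat) list \<times> nat" where "tgt t = from_nat t"
definition kt where "kt t = Suc (fst (tgt t))"
definition yv where "yv t = Yl (fst (snd (tgt t)))"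
definition Nt where "Nt t = Suc (length (fst (snd (tgt t))))"
definition dl where "dl t = 1 / (real (snd (snd (tgt t))) + 1)"
definition Yb where "Yb t = (\<Sum>i<Nt t. norm (yv t i))"
definition cst where "cst t = Yb t * C^2 * real (Nt t) powr \<beta> (kt t)"
definition Kt where "Kt t = max 1 ((C^2 * 4 powr \<beta> (kt t)) powr p)"
definition dprop where "dprop t d \<longleftrightarrow> Nt t \<le> 2^d \<and>
   (\<forall>z::nat. 2^d \<le> z \<longrightarrow> cst t * real z powr (- \<beta> (kt t)) \<le> real z powr (- gam)) \<and>
   Kt t * T (2^d) < dl t"
definition dt where "dt t = (SOME d. dprop t d)"
definition xx where "xx n = (let j = floor_log n; t = tau j; d = dt t; i = (n - 2^j) mod 2^d in
   if 1 \<le> n \<and> d + 1 \<le> j \<and> n - 2^j < 2^(j-1) then yv t i * P (kt t) i / P (kt t) n else 0)"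

lemma gam: "0 < gam" "gam < a" "gam * p > 1" "0 < a" "0 < p"
proof -
  have pp: "0 < p" using p1 by simp
  have ap1: "1 < a * p" using ap pp by (simp add: divide_less_eq mult.commute)
  have a0: "0 < a" using ap pp by (smt (verit) divide_pos_pos)
  have "0 < 1/p" using pp by simp
  hence "0 < a + 1/p" using a0 by linarith
  thus "0 < gam" by (simp add: gam_def)
  show "gam < a" using ap by (simp add: gam_def)
  have "gam * p = (a * p + 1) / 2" using pp by (simp add: gam_def field_simps)
  thus "gam * p > 1" using ap1 by simp
  show "0 < a" "0 < p" by fact+
qed

lemma g_summable: "summable g"
  unfolding g_def using gam by (subst summable_real_powr_iff) simp

lemma g_nonneg: "0 \<le> g i" by (simp add: g_def)

lemma g_anti: "1 \<le> i \<Longrightarrow> i \<le> i' \<Longrightarrow> g i' \<le> g i"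
  unfolding g_def by (rule powr_mono2') (use gam in auto)

lemma kt1: "kt t \<ge> 1" by (simp add: kt_def)

lemma beta_kt: "\<beta> (kt t) \<ge> a" "\<beta> (kt t) > gam" "\<beta> (kt t) > 0"
  using \<beta>a[OF kt1[of t]] gam by auto

lemma P_nz: "k \<ge> 1 \<Longrightarrow> P k n \<noteq> 0"
  using wt[of k] by (auto simp: P_def weight_def)

lemma P0: "P k 0 = 1" by (simp add: P_def)

lemma P_low: "k \<ge> 1 \<Longrightarrow> n \<ge> 1 \<Longrightarrow> real n powr \<beta> k / C \<le> norm (P k n)"
  using Pb by (simp add: P_def)

lemma P_hi: "k \<ge> 1 \<Longrightarrow> n \<ge> 1 \<Longrightarrow> norm (P k n) \<le> C * real n powr \<beta> k"
  using Pb by (simp add: P_def)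

lemma P_up:
  assumes k: "k \<ge> 1" and iN: "i \<le> N" and N: "N \<ge> 1"
  shows "norm (P k i) \<le> C * real N powr \<beta> k"
proof (cases "i = 0")
  case True
  have b: "\<beta> k \<ge> 0" using \<beta>a[OF k] gam by linarith
  have "1 \<le> real N powr \<beta> k" using N b by (intro ge_one_powr_ge_zero) auto
  hence "1 \<le> C * real N powr \<beta> k" using C1 by (metis mult_mono' mult_1 zero_le_one)
  thus ?thesis using True by (simp add: P0)
next
  case False
  have b: "\<beta> k \<ge> 0" using \<beta>a[OF k] gam by linarith
  have "norm (P k i) \<le> C * real i powr \<beta> k" using P_hi[OF k] False by simp
  also have "\<dots> \<le> C * real N powr \<beta> k"
    using C1 iN b by (intro mult_left_mono powr_mono2) auto
  finally show ?thesis .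
qed

lemma yv_zero: "\<not> i < Nt t - 1 \<Longrightarrow> yv t i = 0"
  by (simp add: yv_def Nt_def Yl_def)

lemma yv_nz: "yv t i \<noteq> 0 \<Longrightarrow> i < Nt t"
  using yv_zero[where i=i and t=t] by (cases "i < Nt t - 1") auto

lemma yv_bound: "norm (yv t i) \<le> Yb t"
proof (cases "i < Nt t")
  case True
  thus ?thesis unfolding Yb_def by (intro member_le_sum) auto
next
  case False
  hence "yv t i = 0" using yv_nz by blast
  thus ?thesis by (simp add: Yb_def sum_nonneg)
qed

lemma Yb_nonneg: "0 \<le> Yb t" by (simp add: Yb_def sum_nonneg)

lemma cst_nonneg: "0 \<le> cst t" using Yb_nonneg by (simp add: cst_def)

lemma val_bound:
  assumes i: "i < Nt t" and z: "z \<ge> 1"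
  shows "norm (yv t i * P (kt t) i / P (kt t) z) \<le> cst t * real z powr (- \<beta> (kt t))"
proof -
  let ?k = "kt t" let ?b = "\<beta> (kt t)" let ?N = "real (Nt t)"
  have zp: "0 < real z powr ?b / C" using z C1 by simp
  have "norm (yv t i * P ?k i / P ?k z) = norm (yv t i) * norm (P ?k i) / norm (P ?k z)"
    by (simp add: norm_mult norm_divide)
  also have "\<dots> \<le> Yb t * (C * ?N powr ?b) / (real z powr ?b / C)"
  proof (rule frac_le)
    show "0 \<le> Yb t * (C * ?N powr ?b)" using Yb_nonneg C1 by simp
    show "norm (yv t i) * norm (P ?k i) \<le> Yb t * (C * ?N powr ?b)"
      using yv_bound P_up[OF kt1, of i "Nt t"] i Yb_nonneg by (intro mult_mono) (auto simp: Nt_def)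
    show "0 < real z powr ?b / C" by fact
    show "real z powr ?b / C \<le> norm (P ?k z)" using P_low[OF kt1 z] .
  qed
  also have "\<dots> = cst t * real z powr (- ?b)"
    using C1 z by (simp add: cst_def powr_minus field_simps power2_eq_square)
  finally show ?thesis .
qed

lemma T_lim: "T \<longlonglongrightarrow> 0"
  unfolding T_def[abs_def] by (rule tail_lim[OF g_summable])

lemma Kt_pos: "Kt t \<ge> 1" by (simp add: Kt_def)

lemma dl_pos: "dl t > 0" by (simp add: dl_def)

lemma dprop_ex: "\<exists>d. dprop t d"
proof -
  let ?b = "\<beta> (kt t)"
  define S where "S = max 1 (cst t powr (1 / (?b - gam)))"
  have bg: "?b - gam > 0" using beta_kt by simp
  have cz: "cst t * real z powr (- ?b) \<le> real z powr (- gam)" if zS: "S \<le> real z" for z :: nat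
  proof -
    have z1: "1 \<le> real z" using zS by (simp add: S_def)
    have "cst t \<le> real z powr (?b - gam)"
    proof (cases "cst t = 0")
      case True thus ?thesis by simp
    next
      case False
      hence "cst t = (cst t powr (1 / (?b - gam))) powr (?b - gam)"
        using cst_nonneg[of t] bg by (simp add: powr_powr)
      also have "\<dots> \<le> real z powr (?b - gam)"
        using zS bg by (intro powr_mono2) (auto simp: S_def)
      finally show ?thesis .
    qed
    hence "cst t * real z powr (- ?b) \<le> real z powr (?b - gam) * real z powr (- ?b)"
      by (intro mult_right_mono) auto
    also have "\<dots> = real z powr (- gam)" using z1 by (simp add: powr_add[symmetric])
    finally show ?thesis .
  qed
  have "eventually (\<lambda>M. T M < dl t / Kt t) sequentially"
    using T_lim dl_pos Kt_pos[of t] by (intro order_tendstoD) auto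
  then obtain M0 where M0: "\<And>M. M \<ge> M0 \<Longrightarrow> T M < dl t / Kt t"
    by (auto simp: eventually_sequentially)
  define d where "d = Nt t + M0 + nat \<lceil>S\<rceil>"
  have dlt: "d < 2^d" by (rule less_exp)
  have "Nt t \<le> d" by (simp add: d_def)
  hence "Nt t \<le> 2^d" using dlt by linarith
  moreover have "\<forall>z::nat. 2^d \<le> z \<longrightarrow> cst t * real z powr (- ?b) \<le> real z powr (- gam)"
  proof (intro allI impI cz)
    fix z :: nat assume "2^d \<le> z"
    hence "d \<le> z" using dlt by linarith
    hence "nat \<lceil>S\<rceil> \<le> z" unfolding d_def by linarith
    hence "real (nat \<lceil>S\<rceil>) \<le> real z" by simp
    thus "S \<le> real z" using real_nat_ceiling_ge[of S] by linarith
  qed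
  moreover have "Kt t * T (2^d) < dl t"
  proof -
    have "M0 \<le> d" by (simp add: d_def)
    hence "M0 \<le> 2^d" using dlt by linarith
    hence "T (2^d) < dl t / Kt t" by (rule M0)
    thus ?thesis using Kt_pos[of t] by (simp add: field_simps)
  qed
  ultimately show ?thesis unfolding dprop_def by blast
qed

lemma dt_prop: "dprop t (dt t)"
  unfolding dt_def using dprop_ex[of t] by (rule someI_ex)

lemma xx_eq:
  assumes "1 \<le> n" "2^j \<le> n" "n < 2^(j+1)" "tau j = t" "dt t + 1 \<le> j" "n - 2^j < 2^(j-1)"
  shows "xx n = yv t ((n - 2^j) mod 2^dt t) * P (kt t) ((n - 2^j) mod 2^dt t) / P (kt t) n"
proof -
  have "floor_log n = j" using assms by (intro floor_log_eqI) auto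
  thus ?thesis using assms by (simp add: xx_def Let_def)
qed

lemma xx_nz:
  assumes "xx n \<noteq> 0"
  shows "\<exists>j t. 1 \<le> n \<and> 2^j \<le> n \<and> n < 2^(j+1) \<and> tau j = t \<and> dt t + 1 \<le> j \<and> n - 2^j < 2^(j-1) \<and>
     xx n = yv t ((n - 2^j) mod 2^dt t) * P (kt t) ((n - 2^j) mod 2^dt t) / P (kt t) n"
proof -
  let ?j = "floor_log n"
  have c: "1 \<le> n \<and> dt (tau ?j) + 1 \<le> ?j \<and> n - 2^?j < 2^(?j-1)"
    using assms by (auto simp: xx_def Let_def split: if_splits)
  hence "2^?j \<le> n" "n < 2^(?j+1)" using floor_log_exp2_le[of n] floor_log_exp2_gt[of n] by auto
  thus ?thesis using c xx_eq[of n ?j "tau ?j"] by blast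
qed

lemma xx_unif: "norm (xx n) \<le> real n powr (- gam)"
proof (cases "xx n = 0")
  case True thus ?thesis by simp
next
  case False
  then obtain j t where jt: "1 \<le> n" "2^j \<le> n" "n < 2^(j+1)" "tau j = t" "dt t + 1 \<le> j"
    and xe: "xx n = yv t ((n - 2^j) mod 2^dt t) * P (kt t) ((n - 2^j) mod 2^dt t) / P (kt t) n"
    using xx_nz by blast
  let ?i = "(n - 2^j) mod 2^dt t"
  have "yv t ?i \<noteq> 0" using False xe by auto
  hence i: "?i < Nt t" by (rule yv_nz)
  have "(2::nat)^dt t \<le> 2^j" by (rule power_increasing) (use jt in auto)
  hence Dn: "2^dt t \<le> n" using jt by linarith
  have "norm (xx n) \<le> cst t * real n powr (- \<beta> (kt t))"
    unfolding xe by (rule val_bound[OF i jt(1)])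
  also have "\<dots> \<le> real n powr (- gam)" using dt_prop[of t] Dn unfolding dprop_def by blast
  finally show ?thesis .
qed

lemma xx_unif_p: "norm (xx n) powr p \<le> g n"
proof -
  have "norm (xx n) powr p \<le> (real n powr (- gam)) powr p"
    using xx_unif gam by (intro powr_mono2) auto
  also have "\<dots> = g n" by (simp add: g_def powr_powr)
  finally show ?thesis .
qed

lemma xx_lp: "xx \<in> lp p"
  unfolding lp_def
  by (auto intro!: summable_comparison_test'[OF g_summable] simp: xx_unif_p)


lemma block:
  assumes tj: "tau j = t" and dj: "dt t + 1 \<le> j" and r: "r < 2^(j - 1 - dt t)"
  shows "((bshift (w (kt t)))^^(2^j + 2^dt t * r)) xx \<in> lp p \<and>
    summable (\<lambda>i. norm (((bshift (w (kt t)))^^(2^j + 2^dt t * r)) xx i - yv t i) powr p) \<and>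
    (\<Sum>i. norm (((bshift (w (kt t)))^^(2^j + 2^dt t * r)) xx i - yv t i) powr p) < dl t"
proof -
  define d where "d = dt t"
  define D :: nat where "D = 2^d"
  define k where "k = kt t"
  define m where "m = 2^j + D * r"
  define v where "v = ((bshift (w k))^^m) xx"
  define h :: nat where "h = 2^(j-1)"
  have k1: "k \<ge> 1" using kt1[of t] by (simp add: k_def)
  have D1: "D \<ge> 1" by (simp add: D_def)
  have Dpow: "D * 2^(j-1-d) = h"
    unfolding D_def h_def by (simp add: power_add[symmetric]) (use dj d_def in simp)
  have "D * (r + 1) \<le> D * 2^(j-1-d)" using r d_def by (intro mult_left_mono) auto
  hence DrD: "D * r + D \<le> h" using Dpow by simp
  have j2: "2^j = 2 * h" "2^(j+1) = 4 * h"
    unfolding h_def using dj by (cases j; simp)+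
  have NtD: "Nt t \<le> D" using dt_prop[of t] by (simp add: dprop_def D_def d_def)
  have wnz: "\<And>l. w k l \<noteq> 0" using wt[OF k1] by (simp add: weight_def)
  have vi: "v i = P k (i+m) / P k i * xx (i+m)" for i
    by (simp add: v_def bshift_iter[OF wnz] P_def)
  have exact: "v i = yv t i" if iD: "i < D" for i
  proof -
    have e: "(i + m - 2^j) mod D = i" using iD by (simp add: m_def)
    have "xx (i+m) = yv t i * P k i / P k (i+m)"
      using xx_eq[of "i+m" j t] tj dj DrD iD j2 e unfolding m_def k_def D_def d_def h_def by auto
    thus ?thesis using vi[of i] P_nz[OF k1] by simp
  qed
  have bound: "norm (v i - yv t i) powr p \<le> Kt t * (if D \<le> i then g i else 0)" for i
  proof (cases "i < D")
    case True thus ?thesis using exact[OF True] Kt_pos[of t] by simp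
  next
    case False
    hence iD: "D \<le> i" by simp
    have y0: "yv t i = 0" using yv_nz[of t i] NtD iD by linarith
    have i1: "1 \<le> i" using D1 iD by linarith
    have b: "\<beta> k > gam" "\<beta> k > 0" using beta_kt k_def by auto
    have "norm (v i) powr p \<le> Kt t * g i"
    proof (cases "xx (i+m) = 0")
      case True thus ?thesis using vi[of i] g_nonneg[of i] Kt_pos[of t] by simp
    next
      case False
      then obtain j' t' where jt: "1 \<le> i+m" "2^j' \<le> i+m" "i+m < 2^(j'+1)" "tau j' = t'" "dt t' + 1 \<le> j'"
        and xe: "xx (i+m) = yv t' ((i+m - 2^j') mod 2^dt t') * P (kt t') ((i+m - 2^j') mod 2^dt t') / P (kt t') (i+m)"
        using xx_nz by blast
      have "(2::nat)^j < 2^(j'+1)" using jt m_def by linarith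
      hence jj: "j \<le> j'" by (subst (asm) power_strict_increasing_iff) auto
      show ?thesis
      proof (cases "j' = j")
        case True
        hence tt: "t' = t" using jt tj by simp
        let ?i = "i mod D"
        have e: "(i + m - 2^j) mod D = ?i" by (simp add: m_def)
        hence xe': "xx (i+m) = yv t ?i * P k ?i / P k (i+m)"
          using xe True tt by (simp add: k_def D_def d_def)
        hence "yv t ?i \<noteq> 0" using False by auto
        hence ii: "?i < Nt t" by (rule yv_nz)
        have "v i = yv t ?i * P k ?i / P k i"
          using vi[of i] xe' P_nz[OF k1] by simp
        hence "norm (v i) \<le> cst t * real i powr (- \<beta> (kt t))"
          using val_bound[OF ii i1] by (simp add: k_def)
        also have "\<dots> \<le> real i powr (- gam)"
          using dt_prop[of t] iD unfolding dprop_def D_def d_def by blast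
        finally have "norm (v i) powr p \<le> (real i powr (- gam)) powr p"
          using gam by (intro powr_mono2) auto
        hence "norm (v i) powr p \<le> g i" by (simp add: g_def powr_powr)
        also have "g i \<le> Kt t * g i" using Kt_pos[of t] g_nonneg[of i] by (simp add: mult_le_cancel_right1)
        finally show ?thesis .
      next
        case False
        hence "j + 1 \<le> j'" using jj by simp
        hence "(2::nat)^(j+1) \<le> 2^j'" by (rule power_increasing) simp
        hence n4: "4 * h \<le> i + m" using jt j2 by linarith
        have m3: "m < 3 * h" using DrD D1 j2 by (simp add: m_def)
        have i4: "i + m \<le> 4 * i" using n4 m3 by linarith
        let ?n = "i + m"
        have n1: "1 \<le> ?n" using i1 by simp
        have Pn: "norm (P k ?n) \<le> C * real ?n powr \<beta> k" by (rule P_hi[OF k1 n1])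
        have Pi: "real i powr \<beta> k / C \<le> norm (P k i)" by (rule P_low[OF k1 i1])
        have ipos: "0 < real i powr \<beta> k / C" using i1 C1 by simp
        have "real ?n powr \<beta> k \<le> (4 * real i) powr \<beta> k"
          using i4 b by (intro powr_mono2) auto
        also have "\<dots> = 4 powr \<beta> k * real i powr \<beta> k" by (simp add: powr_mult)
        finally have n4b: "real ?n powr \<beta> k \<le> 4 powr \<beta> k * real i powr \<beta> k" .
        have "norm (P k ?n) / norm (P k i) \<le> (C * real ?n powr \<beta> k) / (real i powr \<beta> k / C)"
          by (rule frac_le) (use Pn Pi ipos C1 in auto)
        also have "\<dots> = C^2 * (real ?n powr \<beta> k / real i powr \<beta> k)"
          using C1 i1 by (simp add: field_simps power2_eq_square)
        also have "\<dots> \<le> C^2 * 4 powr \<beta> k"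
          using n4b i1 by (intro mult_left_mono) (auto simp: divide_le_eq)
        finally have ratio: "norm (P k ?n) / norm (P k i) \<le> C^2 * 4 powr \<beta> k" .
        have xn: "norm (xx ?n) \<le> real i powr (- gam)"
        proof -
          have "norm (xx ?n) \<le> real ?n powr (- gam)" by (rule xx_unif)
          also have "\<dots> \<le> real i powr (- gam)" using i1 gam by (intro powr_mono2') auto
          finally show ?thesis .
        qed
        have "norm (v i) = norm (P k ?n) / norm (P k i) * norm (xx ?n)"
          by (simp add: vi norm_mult norm_divide)
        also have "\<dots> \<le> (C^2 * 4 powr \<beta> k) * real i powr (- gam)"
          using ratio xn by (intro mult_mono) auto
        finally have "norm (v i) powr p \<le> ((C^2 * 4 powr \<beta> k) * real i powr (- gam)) powr p"
          using gam by (intro powr_mono2) auto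
        also have "\<dots> = (C^2 * 4 powr \<beta> k) powr p * g i"
          using C1 by (simp add: powr_mult g_def powr_powr)
        also have "\<dots> \<le> Kt t * g i"
          using g_nonneg[of i] by (intro mult_right_mono) (auto simp: Kt_def k_def)
        finally show ?thesis .
      qed
    qed
    thus ?thesis using y0 iD by simp
  qed
  have sb: "summable (\<lambda>i. Kt t * (if D \<le> i then g i else 0))"
    by (intro summable_mult tail_summable g_summable)
  have se: "summable (\<lambda>i. norm (v i - yv t i) powr p)"
    by (rule summable_comparison_test'[OF sb]) (use bound in auto)
  have "(\<Sum>i. norm (v i - yv t i) powr p) \<le> (\<Sum>i. Kt t * (if D \<le> i then g i else 0))"
    by (rule suminf_le[OF bound se sb])
  also have "\<dots> = Kt t * T D"
    unfolding T_def by (rule suminf_mult[OF tail_summable[OF g_summable]])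
  also have "\<dots> < dl t" using dt_prop[of t] by (simp add: dprop_def D_def d_def)
  finally have lt: "(\<Sum>i. norm (v i - yv t i) powr p) < dl t" .
  have "summable (\<lambda>i. norm (v i) powr p)"
  proof (subst summable_cong)
    show "eventually (\<lambda>i. norm (v i) powr p = norm (v i - yv t i) powr p) sequentially"
      unfolding eventually_sequentially
    proof (rule exI[of _ "Nt t"], intro allI impI)
      fix n assume "Nt t \<le> n"
      hence "yv t n = 0" using yv_nz[of t n] by linarith
      thus "norm (v n) powr p = norm (v n - yv t n) powr p" by simp
    qed
    show "summable (\<lambda>i. norm (v i - yv t i) powr p)" by (rule se)
  qed
  hence "v \<in> lp p" by (simp add: lp_def)
  thus ?thesis using se lt by (simp add: v_def m_def k_def D_def d_def)
qed

lemma target: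
  assumes U: "lp_open p U" "U \<noteq> {}" and k: "k \<ge> 1"
  shows "\<exists>t. kt t = k \<and> (\<forall>v. v \<in> lp p \<longrightarrow> summable (\<lambda>i. norm (v i - yv t i) powr p) \<longrightarrow>
           (\<Sum>i. norm (v i - yv t i) powr p) < dl t \<longrightarrow> v \<in> U)"
proof -
  have pp: "0 < p" using gam by simp
  obtain u where uU: "u \<in> U" using U by blast
  have ul: "u \<in> lp p" using U uU by (auto simp: lp_open_def)
  obtain e where e: "e > 0" and eU: "\<And>v. v \<in> lp p \<Longrightarrow> lp_norm p (\<lambda>n. v n - u n) < e \<Longrightarrow> v \<in> U"
    using U uU unfolding lp_open_def by blast
  define \<eta> where "\<eta> = e powr p / (4 * 2 powr p)"
  have eta: "\<eta> > 0" using e by (simp add: \<eta>_def)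
  obtain ys where ys: "summable (\<lambda>i. norm (u i - Yl ys i) powr p)" "(\<Sum>i. norm (u i - Yl ys i) powr p) < \<eta>"
    using approx_lp[OF pp ul eta] by blast
  obtain q :: nat where q: "inverse (real (Suc q)) < \<eta>" using reals_Archimedean[OF eta] by blast
  define t where "t = to_nat (k - 1, ys, q)"
  have tg: "tgt t = (k - 1, ys, q)" by (simp add: tgt_def t_def)
  have kt: "kt t = k" using k by (simp add: kt_def tg)
  have yt: "yv t = Yl ys" by (simp add: yv_def tg)
  have dlt: "dl t < \<eta>" using q by (simp add: dl_def tg inverse_eq_divide add.commute)
  have "v \<in> U" if vl: "v \<in> lp p" and sv: "summable (\<lambda>i. norm (v i - Yl ys i) powr p)"
    and lv: "(\<Sum>i. norm (v i - Yl ys i) powr p) < dl t" for v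
  proof -
    let ?F1 = "\<lambda>i. norm (v i - Yl ys i) powr p"
    let ?F2 = "\<lambda>i. norm (u i - Yl ys i) powr p"
    have le: "norm (v i - u i) powr p \<le> 2 powr p * (?F1 i + ?F2 i)" for i
    proof -
      have "norm (v i - u i) powr p = norm ((v i - Yl ys i) + (Yl ys i - u i)) powr p" by simp
      also have "\<dots> \<le> 2 powr p * (norm (v i - Yl ys i) powr p + norm (Yl ys i - u i) powr p)"
        by (rule quasi_tri[OF pp])
      finally show ?thesis by (simp add: norm_minus_commute)
    qed
    have s12: "summable (\<lambda>i. 2 powr p * (?F1 i + ?F2 i))"
      by (intro summable_mult summable_add sv ys(1))
    have sd: "summable (\<lambda>i. norm (v i - u i) powr p)"
      by (rule summable_comparison_test'[OF s12]) (use le in auto)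
    have "(\<Sum>i. norm (v i - u i) powr p) \<le> (\<Sum>i. 2 powr p * (?F1 i + ?F2 i))"
      by (rule suminf_le[OF le sd s12])
    also have "\<dots> = 2 powr p * (suminf ?F1 + suminf ?F2)"
      by (simp add: suminf_mult suminf_add[OF sv ys(1)] summable_add[OF sv ys(1)])
    also have "\<dots> < 2 powr p * (\<eta> + \<eta>)"
      using lv dlt ys(2) by (intro mult_strict_left_mono) auto
    also have "\<dots> = e powr p / 2" by (simp add: \<eta>_def field_simps)
    also have "\<dots> < e powr p" using e by simp
    finally have lt: "(\<Sum>i. norm (v i - u i) powr p) < e powr p" .
    have "lp_norm p (\<lambda>n. v n - u n) = (\<Sum>i. norm (v i - u i) powr p) powr (1/p)"
      by (simp add: lp_norm_def)
    also have "\<dots> < (e powr p) powr (1/p)"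
      using lt pp by (intro powr_less_mono2) (auto intro!: suminf_nonneg sd)
    also have "\<dots> = e" using pp e by (simp add: powr_powr)
    finally show ?thesis by (rule eU[OF vl])
  qed
  thus ?thesis using kt yt by (intro exI[of _ t]) auto
qed

lemma density_pos:
  assumes H: "\<And>j r. tau j = t \<Longrightarrow> d + 1 \<le> j \<Longrightarrow> r < 2^(j-1-d) \<Longrightarrow> 2^j + 2^d * r \<in> G"
  shows "lower_density G > 0"
proof -
  define W :: nat where "W = 2^(t+1)"
  define \<delta> :: real where "\<delta> = 1 / 2^(d+W+2)"
  have dpos: "\<delta> > 0" by (simp add: \<delta>_def)
  have ev: "eventually (\<lambda>N. ereal \<delta> \<le> ereal (real (card (G \<inter> {..<N})) / real N)) sequentially"
    unfolding eventually_sequentially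
  proof (intro exI allI impI)
    fix N :: nat assume NN: "2^(d+1+W) \<le> N"
    define j0 where "j0 = floor_log N"
    have N0: "N > 0" using NN by (metis gr0I le_zero_eq power_not_zero zero_neq_numeral)
    have j0N: "2^j0 \<le> N" "N < 2^(j0+1)"
      using floor_log_exp2_le[OF N0] floor_log_exp2_gt[of N] by (auto simp: j0_def)
    have "floor_log (2^(d+1+W)) \<le> j0" unfolding j0_def by (rule floor_log_le_iff[OF NN])
    hence dj0: "d + 1 + W \<le> j0" by simp
    obtain j where j: "j0 - W \<le> j" "j < j0 - W + 2^(t+1)" "tau j = t"
      using tau_window by blast
    have jj0: "j < j0" "d + 1 \<le> j" "j0 \<le> j + W" using j dj0 by (auto simp: W_def)
    define R :: nat where "R = 2^(j-1-d)"
    define I where "I = (\<lambda>r. 2^j + 2^d * r) ` {..<R}"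
    have RD: "(2::nat)^d * R = 2^(j-1)" unfolding R_def by (simp add: power_add[symmetric]) (use jj0 in simp)
    have j2: "(2::nat)^j = 2 * 2^(j-1)" using jj0 by (cases j) auto
    have "I \<subseteq> G \<inter> {..<N}"
    proof
      fix x assume "x \<in> I"
      then obtain r where r: "r < R" "x = 2^j + 2^d * r" by (auto simp: I_def)
      have "x \<in> G" using H[OF j(3) jj0(2)] r by (simp add: R_def)
      moreover have "2^d * r < 2^d * R" using r by simp
      hence "x < 2^(j+1)" using r RD j2 by simp
      moreover have "(2::nat)^(j+1) \<le> 2^j0" by (rule power_increasing) (use jj0 in auto)
      ultimately show "x \<in> G \<inter> {..<N}" using j0N by auto
    qed
    hence cI: "card I \<le> card (G \<inter> {..<N})" by (intro card_mono) auto
    have "card I = R" unfolding I_def by (subst card_image) (auto simp: inj_on_def)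
    hence cR: "real R \<le> real (card (G \<inter> {..<N}))" using cI by linarith
    have ex: "j+W+1 = (j-1-d) + (d+W+2)" using jj0 by simp
    have "(2::nat)^(j+W+1) = R * 2^(d+W+2)"
      unfolding R_def by (subst ex) (rule power_add)
    hence eq: "\<delta> * 2^(j+W+1) = real R"
      unfolding \<delta>_def by (metis (mono_tags, lifting) nonzero_eq_divide_eq of_nat_mult of_nat_numeral of_nat_power
        power_not_zero times_divide_eq_left zero_neq_numeral mult_1)
    have "(2::nat)^(j0+1) \<le> 2^(j+W+1)" by (rule power_increasing) (use jj0 in auto)
    hence "real N \<le> 2^(j+W+1)" using j0N
      by (metis less_imp_le_nat of_nat_le_iff of_nat_numeral of_nat_power order.trans)
    hence "\<delta> * real N \<le> \<delta> * 2^(j+W+1)" using dpos by (intro mult_left_mono) auto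
    hence "\<delta> * real N \<le> real (card (G \<inter> {..<N}))" using eq cR by linarith
    thus "ereal \<delta> \<le> ereal (real (card (G \<inter> {..<N})) / real N)"
      using N0 by (simp add: field_simps)
  qed
  have "ereal \<delta> \<le> lower_density G"
    unfolding lower_density_def by (rule Liminf_bounded[OF ev])
  thus ?thesis using dpos by (metis ereal_less(2) less_le_trans)
qed

lemma main_fh: "k \<ge> 1 \<Longrightarrow> freq_hypercyclic p (bshift (w k)) xx"
proof -
  assume k: "k \<ge> 1"
  have "lower_density {n. ((bshift (w k))^^n) xx \<in> U} > 0" if U: "lp_open p U" "U \<noteq> {}" for U
  proof -
    obtain t where kt: "kt t = k" and tU: "\<And>v. v \<in> lp p \<Longrightarrow> summable (\<lambda>i. norm (v i - yv t i) powr p) \<Longrightarrow>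
           (\<Sum>i. norm (v i - yv t i) powr p) < dl t \<Longrightarrow> v \<in> U"
      using target[OF U k] by blast
    show ?thesis
    proof (rule density_pos[of t "dt t"])
      fix j r :: nat assume "tau j = t" "dt t + 1 \<le> j" "r < 2^(j-1-dt t)"
      from block[OF this] show "2^j + 2^dt t * r \<in> {n. ((bshift (w k))^^n) xx \<in> U}"
        using tU kt by auto
    qed
  qed
  thus ?thesis unfolding freq_hypercyclic_def using xx_lp by auto
qed

lemma main_ex: "\<exists>x. \<forall>k\<ge>1. freq_hypercyclic p (bshift (w k)) x"
  using main_fh by blast

end

theorem corollary4p3:
  fixes p a C :: real and \<beta> :: "nat \<Rightarrow> real" and w :: "nat \<Rightarrow> nat \<Rightarrow> complex"
  assumes "1 \<le> p" and "a > 1 / p"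
    and "\<And>k. k \<ge> 1 \<Longrightarrow> \<beta> k \<ge> a"
    and "\<And>k. k \<ge> 1 \<Longrightarrow> weight (w k)"
    and "C \<ge> 1"
    and "\<And>k n. k \<ge> 1 \<Longrightarrow> n \<ge> 1 \<Longrightarrow>
           real n powr \<beta> k / C \<le> norm (\<Prod>j\<in>{1..n}. w k j)
         \<and> norm (\<Prod>j\<in>{1..n}. w k j) \<le> C * real n powr \<beta> k"
  shows "\<exists>(M :: (nat \<Rightarrow> real) measure) X. prob_space M \<and> X \<in> M \<rightarrow>\<^sub>M lp_borel p \<and>
           (AE \<omega> in M. \<forall>k\<ge>1. freq_hypercyclic p (bshift (w k)) (X \<omega>))"
proof -
  have "\<exists>x. \<forall>k\<ge>1. freq_hypercyclic p (bshift (w k)) x"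
    apply (rule main_ex[of p a \<beta> w C])
    using assms by auto
  then obtain x where x: "\<forall>k\<ge>1. freq_hypercyclic p (bshift (w k)) x" by blast
  have xl: "x \<in> lp p" using x unfolding freq_hypercyclic_def by auto
  let ?M = "return (count_space UNIV) (\<lambda>_::nat. 0::real)"
  have "prob_space ?M" by (rule prob_space_return) simp
  moreover have "(\<lambda>_. x) \<in> ?M \<rightarrow>\<^sub>M lp_borel p"
    by (rule measurable_const) (simp add: lp_borel_def space_measure_of_conv xl)
  moreover have "AE \<omega> in ?M. \<forall>k\<ge>1. freq_hypercyclic p (bshift (w k)) ((\<lambda>_. x) \<omega>)"
    using x by simp
  ultimately show ?thesis by blast
qed

end
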